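(* Let $k>0$, $\theta>0$, and let $X_1,\dots,X_n$ be i.i.d. Gamma random variables with shape parameter $k$ and scale parameter $\theta$. Let $\widehat{\boldsymbol\theta}=\frac{1}{kn}\sum_{i=1}^nX_i$. Let $\varepsilon>0$ and $0<\delta<1$, and define $$\zeta=2C_{\mathrm{BE}}\Big(3+\frac6k\Big)^{3/4}\sqrt{\frac{k[\varepsilon-\ln(1+\varepsilon)]}{\ln\frac1\delta}}.$$ Then $\Pr\{|\widehat{\boldsymbol\theta}-\theta|<\varepsilon\theta\}>1-\delta$ provided that $$n>\frac{\ln\frac{1+\zeta}{\delta}}{k[\varepsilon-\ln(1+\varepsilon)]}.$$
   Context: $C_{\mathrm{BE}}$ denotes the absolute constant in the Berry–Esseen inequality: for i.i.d. $Y_1,Y_2,\dots$ distributed as $Y$ with $\mathbb{E}[Y]=0$, $\mathbb{E}[Y^2]>0$, $\mathbb{E}[|Y|^3]<\infty$, the cdf $F_n$ of $\sum_{i=1}^nY_i/\sqrt{n\mathbb{E}[Y^2]}$ satisfies $|F_n(y)-\Phi(y)|\le\frac{C_{\mathrm{BE}}}{\sqrt n}\frac{\mathbb{E}[|Y|^3]}{\mathbb{E}^{3/2}[Y^2]}$ for all $y,n$, where $\Phi$ is the standard normal cdf. *)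

theory Defs
  imports "HOL-Probability.Probability"
begin

fun conv_pow :: "real measure \<Rightarrow> nat \<Rightarrow> real measure" where
  "conv_pow \<mu> 0 = return borel 0"
| "conv_pow \<mu> (Suc n) = convolution \<mu> (conv_pow \<mu> n)"

definition Phi :: "real \<Rightarrow> real" where
  "Phi y = measure (density lborel std_normal_density) {..y}"

definition BE_constant :: "real \<Rightarrow> bool" where
  "BE_constant C \<longleftrightarrow>
    (\<forall>\<mu> :: real measure.
       prob_space \<mu> \<and> sets \<mu> = sets borel \<and> integrable \<mu> (\<lambda>x. \<bar>x\<bar> ^ 3) \<and>
       (\<integral>x. x \<partial>\<mu>) = 0 \<and> (\<integral>x. x ^ 2 \<partial>\<mu>) > 0 \<longrightarrow>
       (\<forall>n::nat. n \<ge> 1 \<longrightarrow> (\<forall>y::real.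
          \<bar>measure (conv_pow \<mu> n) {.. y * sqrt (real n * (\<integral>x. x ^ 2 \<partial>\<mu>))} - Phi y\<bar>
            \<le> C / sqrt (real n) * ((\<integral>x. \<bar>x\<bar> ^ 3 \<partial>\<mu>) / (\<integral>x. x ^ 2 \<partial>\<mu>) powr (3/2)))))"

definition gamma_density :: "real \<Rightarrow> real \<Rightarrow> real \<Rightarrow> real" where
  "gamma_density k \<theta> x =
     (if x > 0 then x powr (k - 1) * exp (- x / \<theta>) / (Gamma k * \<theta> powr k) else 0)"

end

theory Submission
  imports Defs
begin

lemma Phi_0: "Phi 0 = 1/2"
proof -
  let ?f = "\<lambda>x. ennreal (std_normal_density x)"
  let ?N = "density lborel ?f"
  interpret N: prob_space ?N by (rule prob_space_normal_density) simp
  have A: "emeasure ?N {..0} = emeasure ?N {0..}"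
  proof -
    have "emeasure ?N {..0} = (\<integral>\<^sup>+x. ?f x * indicator {..0} x \<partial>lborel)" by (simp add: emeasure_density)
    also have "\<dots> = (\<integral>\<^sup>+x. ?f (-x) * indicator {..0} (-x) \<partial>lborel)"
      using nn_integral_real_affine[of "\<lambda>x. ?f x * indicator {..0} x" "-1" 0] by simp
    also have "\<dots> = (\<integral>\<^sup>+x. ?f x * indicator {0..} x \<partial>lborel)"
      by (intro nn_integral_cong) (auto simp: std_normal_density_def split: split_indicator)
    also have "\<dots> = emeasure ?N {0..}" by (simp add: emeasure_density)
    finally show ?thesis .
  qed
  have Z: "emeasure ?N {0} = 0"
  proof -
    have "{0} \<in> null_sets ?N"
    proof -
      have "AE x in lborel. x \<in> {0} \<longrightarrow> ?f x = 0"
        using AE_lborel_singleton[of 0] by (rule eventually_mono) simp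
      then show ?thesis by (subst null_sets_density_iff) auto
    qed
    then show ?thesis by auto
  qed
  have B: "N.prob {..0} = N.prob {0..}" using A by (simp add: measure_def)
  have C: "N.prob {0..} = N.prob {0} + N.prob {0<..}"
  proof -
    have "{0::real..} = insert 0 {0<..}" by auto
    then show ?thesis using N.finite_measure_Union[of "{0}" "{0<..}"] by auto
  qed
  have D: "N.prob {0} = 0" using Z by (simp add: measure_def)
  have E: "N.prob {..0} + N.prob {0<..} = 1"
  proof -
    have "{..0::real} \<union> {0<..} = UNIV" "{..0::real} \<inter> {0<..} = {}" by auto
    then show ?thesis using N.finite_measure_Union[of "{..0}" "{0<..}"] N.prob_space by auto
  qed
  have "N.prob {..0} = 1/2" using B C D E by linarith
  then show ?thesis by (simp add: Phi_def)
qed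

lemma conv_pow_basic:
  assumes "prob_space \<mu>" "sets \<mu> = sets borel"
  shows "prob_space (conv_pow \<mu> n) \<and> sets (conv_pow \<mu> n) = sets borel"
proof (induction n)
  case 0
  then show ?case by (auto intro: prob_space_return)
next
  case (Suc n)
  interpret A: prob_space \<mu> by fact
  interpret B: prob_space "conv_pow \<mu> n" using Suc by auto
  interpret P: pair_prob_space \<mu> "conv_pow \<mu> n" ..
  have "prob_space (distr (\<mu> \<Otimes>\<^sub>M conv_pow \<mu> n) borel (\<lambda>(x, y). x + y))"
    by (rule P.prob_space_distr) (use Suc assms in auto)
  then show ?case by (simp add: convolution_def)
qed

lemma conv_pow_nn:
  assumes "prob_space \<mu>" "sets \<mu> = sets borel" "f \<in> borel_measurable borel"
  shows "(\<integral>\<^sup>+x. f x \<partial>conv_pow \<mu> (Suc n)) = (\<integral>\<^sup>+x. \<integral>\<^sup>+y. f (x + y) \<partial>conv_pow \<mu> n \<partial>\<mu>)"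
proof -
  have B: "prob_space (conv_pow \<mu> n)" "sets (conv_pow \<mu> n) = sets borel"
    using conv_pow_basic[OF assms(1,2)] by auto
  show ?thesis
    using nn_integral_convolution[of \<mu> "conv_pow \<mu> n" f] assms B
    by (simp add: prob_space.finite_measure)
qed

lemma inner_meas:
  assumes "prob_space N" "sets N = sets borel" "f \<in> borel_measurable borel"
  shows "(\<lambda>x. \<integral>\<^sup>+y. f (x + y::real) \<partial>N) \<in> borel_measurable borel"
proof -
  interpret N: prob_space N by fact
  have [measurable_cong]: "sets N = sets borel" by fact
  note [measurable] = assms(3)
  show ?thesis by (rule N.borel_measurable_nn_integral) measurable
qed

lemma conv_pow_tilt:
  assumes "prob_space \<mu>" "sets \<mu> = sets borel" "prob_space \<nu>" "sets \<nu> = sets borel" "a \<ge> 0"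
    and H: "\<And>g. g \<in> borel_measurable borel \<Longrightarrow>
        (\<integral>\<^sup>+x. g x \<partial>\<nu>) = (\<integral>\<^sup>+x. g x * ennreal (a * exp (l * x)) \<partial>\<mu>)"
  shows "f \<in> borel_measurable borel \<Longrightarrow>
    (\<integral>\<^sup>+x. f x \<partial>conv_pow \<nu> n) = (\<integral>\<^sup>+x. f x * ennreal (a ^ n * exp (l * x)) \<partial>conv_pow \<mu> n)"
proof (induction n arbitrary: f)
  case 0
  then show ?case by (simp add: nn_integral_return)
next
  case (Suc n)
  note f[measurable] = Suc.prems
  have Bm: "prob_space (conv_pow \<mu> n)" "sets (conv_pow \<mu> n) = sets borel"
    using conv_pow_basic[OF assms(1,2)] by auto
  have Bn: "prob_space (conv_pow \<nu> n)" "sets (conv_pow \<nu> n) = sets borel"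
    using conv_pow_basic[OF assms(3,4)] by auto
  let ?E = "\<lambda>n x. ennreal (a ^ n * exp (l * x))"
  have "(\<integral>\<^sup>+x. f x \<partial>conv_pow \<nu> (Suc n)) = (\<integral>\<^sup>+x. \<integral>\<^sup>+y. f (x + y) \<partial>conv_pow \<nu> n \<partial>\<nu>)"
    by (rule conv_pow_nn[OF assms(3,4) f])
  also have "\<dots> = (\<integral>\<^sup>+x. \<integral>\<^sup>+y. f (x + y) * ?E n y \<partial>conv_pow \<mu> n \<partial>\<nu>)"
    by (intro nn_integral_cong Suc.IH) measurable
  also have "\<dots> = (\<integral>\<^sup>+x. (\<integral>\<^sup>+y. f (x + y) * ?E n y \<partial>conv_pow \<mu> n) * ennreal (a * exp (l * x)) \<partial>\<mu>)"
  proof (rule H)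
    interpret Bm: prob_space "conv_pow \<mu> n" by (rule Bm(1))
    have [measurable_cong]: "sets (conv_pow \<mu> n) = sets borel" by (rule Bm(2))
    show "(\<lambda>x. \<integral>\<^sup>+y. f (x + y) * ?E n y \<partial>conv_pow \<mu> n) \<in> borel_measurable borel"
      by (rule Bm.borel_measurable_nn_integral) measurable
  qed
  also have "\<dots> = (\<integral>\<^sup>+x. \<integral>\<^sup>+y. f (x + y) * ?E (Suc n) (x + y) \<partial>conv_pow \<mu> n \<partial>\<mu>)"
  proof (intro nn_integral_cong)
    fix x
    have "(\<integral>\<^sup>+y. f (x + y) * ?E n y \<partial>conv_pow \<mu> n) * ennreal (a * exp (l * x))
       = (\<integral>\<^sup>+y. f (x + y) * ?E n y * ennreal (a * exp (l * x)) \<partial>conv_pow \<mu> n)"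
      by (rule nn_integral_multc[symmetric]) (use Bm in measurable)
    also have "\<dots> = (\<integral>\<^sup>+y. f (x + y) * ?E (Suc n) (x + y) \<partial>conv_pow \<mu> n)"
    proof (intro nn_integral_cong)
      fix y
      have "?E n y * ennreal (a * exp (l * x)) = ?E (Suc n) (x + y)"
        using assms(5) by (simp add: ennreal_mult'[symmetric] exp_add[symmetric] algebra_simps)
      then show "f (x + y) * ?E n y * ennreal (a * exp (l * x)) = f (x + y) * ?E (Suc n) (x + y)"
        by (simp add: mult.assoc)
    qed
    finally show "(\<integral>\<^sup>+y. f (x + y) * ?E n y \<partial>conv_pow \<mu> n) * ennreal (a * exp (l * x))
       = (\<integral>\<^sup>+y. f (x + y) * ?E (Suc n) (x + y) \<partial>conv_pow \<mu> n)" .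
  qed
  also have "\<dots> = (\<integral>\<^sup>+x. f x * ?E (Suc n) x \<partial>conv_pow \<mu> (Suc n))"
    by (rule conv_pow_nn[symmetric, OF assms(1,2)]) measurable
  finally show ?case .
qed

lemma conv_pow_shift:
  assumes "prob_space \<mu>" "sets \<mu> = sets borel"
  shows "f \<in> borel_measurable borel \<Longrightarrow>
    (\<integral>\<^sup>+x. f x \<partial>conv_pow (distr \<mu> borel (\<lambda>x. x - m)) n) = (\<integral>\<^sup>+x. f (x - real n * m) \<partial>conv_pow \<mu> n)"
proof (induction n arbitrary: f)
  case 0
  then show ?case by (simp add: nn_integral_return)
next
  case (Suc n)
  note f[measurable] = Suc.prems
  let ?\<mu> = "distr \<mu> borel (\<lambda>x. x - m)"
  interpret A: prob_space \<mu> by fact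
  have P: "prob_space ?\<mu>" by (rule A.prob_space_distr) (use assms in simp)
  have Bm: "prob_space (conv_pow \<mu> n)" "sets (conv_pow \<mu> n) = sets borel"
    using conv_pow_basic[OF assms(1,2)] by auto
  interpret Bm: prob_space "conv_pow \<mu> n" by (rule Bm(1))
  have [measurable_cong]: "sets (conv_pow \<mu> n) = sets borel" "sets \<mu> = sets borel" by (rule Bm(2), rule assms(2))
  have "(\<integral>\<^sup>+x. f x \<partial>conv_pow ?\<mu> (Suc n)) = (\<integral>\<^sup>+x. \<integral>\<^sup>+y. f (x + y) \<partial>conv_pow ?\<mu> n \<partial>?\<mu>)"
    by (rule conv_pow_nn[OF P _ f]) simp
  also have "\<dots> = (\<integral>\<^sup>+x. \<integral>\<^sup>+y. f (x + (y - real n * m)) \<partial>conv_pow \<mu> n \<partial>?\<mu>)"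
    by (intro nn_integral_cong Suc.IH) measurable
  also have "\<dots> = (\<integral>\<^sup>+x. \<integral>\<^sup>+y. f ((x - m) + (y - real n * m)) \<partial>conv_pow \<mu> n \<partial>\<mu>)"
  proof -
    have m1: "(\<lambda>x. x - m) \<in> \<mu> \<rightarrow>\<^sub>M borel" by measurable
    have m2: "(\<lambda>x. \<integral>\<^sup>+y. f (x + (y - real n * m)) \<partial>conv_pow \<mu> n) \<in> borel_measurable ?\<mu>"
      by simp
    show ?thesis using nn_integral_distr[OF m1 m2] by simp
  qed
  also have "\<dots> = (\<integral>\<^sup>+x. \<integral>\<^sup>+y. (\<lambda>z. f (z - real (Suc n) * m)) (x + y) \<partial>conv_pow \<mu> n \<partial>\<mu>)"
    by (intro nn_integral_cong) (simp add: algebra_simps)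
  also have "\<dots> = (\<integral>\<^sup>+x. f (x - real (Suc n) * m) \<partial>conv_pow \<mu> (Suc n))"
    by (rule conv_pow_nn[symmetric, OF assms(1,2)]) measurable
  finally show ?case .
qed

lemma conv_pow_neg:
  assumes "prob_space \<nu>" "sets \<nu> = sets borel" "emeasure \<nu> {..0} = 0"
  shows "emeasure (conv_pow \<nu> n) {..<0} = 0 \<and> emeasure (conv_pow \<nu> (Suc n)) {..0} = 0"
proof (induction n)
  have [measurable_cong]: "sets \<nu> = sets borel" by (rule assms(2))
  have AEpos: "AE x in \<nu>. x > 0"
    by (rule AE_I'[of "{..0}"]) (use assms in auto)
  have key: "emeasure (conv_pow \<nu> (Suc m)) A = 0"
    if A: "A \<in> sets borel" and sub: "\<And>x. x > 0 \<Longrightarrow> {y. x + y \<in> A} \<subseteq> {..<0}"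
      and Z: "emeasure (conv_pow \<nu> m) {..<0} = 0" for A m
  proof -
    have Bm: "prob_space (conv_pow \<nu> m)" "sets (conv_pow \<nu> m) = sets borel"
      using conv_pow_basic[OF assms(1,2)] by auto
    have [measurable_cong]: "sets (conv_pow \<nu> m) = sets borel" by (rule Bm(2))
    have [measurable]: "A \<in> sets borel" by (rule A)
    have "emeasure (conv_pow \<nu> (Suc m)) A = (\<integral>\<^sup>+x. indicator A x \<partial>conv_pow \<nu> (Suc m))"
      using Bm A by (simp add: conv_pow_basic[OF assms(1,2)])
    also have "\<dots> = (\<integral>\<^sup>+x. \<integral>\<^sup>+y. indicator A (x + y) \<partial>conv_pow \<nu> m \<partial>\<nu>)"
      by (rule conv_pow_nn[OF assms(1,2)]) measurable
    also have "\<dots> = (\<integral>\<^sup>+x. 0 \<partial>\<nu>)"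
    proof (rule nn_integral_cong_AE, rule eventually_mono[OF AEpos])
      fix x :: real assume x: "x > 0"
      have "(\<integral>\<^sup>+y. indicator A (x + y) \<partial>conv_pow \<nu> m) = (\<integral>\<^sup>+y. indicator {y. x + y \<in> A} y \<partial>conv_pow \<nu> m)"
        by (intro nn_integral_cong) (simp split: split_indicator)
      also have "\<dots> = emeasure (conv_pow \<nu> m) {y. x + y \<in> A}"
        by (rule nn_integral_indicator) (simp add: Bm(2))
      also have "\<dots> \<le> emeasure (conv_pow \<nu> m) {..<0}"
        by (rule emeasure_mono) (use sub[OF x] Bm in auto)
      finally show "(\<integral>\<^sup>+y. indicator A (x + y) \<partial>conv_pow \<nu> m) = 0" using Z by simp
    qed
    finally show ?thesis by simp
  qed
  {
    case 0
    have "emeasure (conv_pow \<nu> 0) {..<0} = 0" by simp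
    have "\<And>x. 0 < x \<Longrightarrow> {y::real. x + y \<le> 0} \<subseteq> {..<0}" by auto
    then show ?case using key[of "{..0}" 0] by auto
  next
    case (Suc n)
    have "\<And>x. 0 < x \<Longrightarrow> {y::real. x + y \<le> 0} \<subseteq> {..<0}" "\<And>x. 0 < x \<Longrightarrow> {y::real. x + y < 0} \<subseteq> {..<0}" by auto
    then show ?case using Suc key[of "{..<0}" n] key[of "{..0}" "Suc n"] by auto
  }
qed

lemma conv_pow_atom:
  assumes "prob_space \<nu>" "sets \<nu> = sets borel" "\<And>t. emeasure \<nu> {t} = 0"
  shows "emeasure (conv_pow \<nu> (Suc n)) {t} = 0"
proof -
  have Bm: "prob_space (conv_pow \<nu> n)" "sets (conv_pow \<nu> n) = sets borel"
    using conv_pow_basic[OF assms(1,2)] by auto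
  have "conv_pow \<nu> (Suc n) = convolution (conv_pow \<nu> n) \<nu>"
    using convolution_commutative[of \<nu> "conv_pow \<nu> n"] Bm assms by (simp add: prob_space.finite_measure)
  then have "emeasure (conv_pow \<nu> (Suc n)) {t} = (\<integral>\<^sup>+x. \<integral>\<^sup>+y. indicator {t} (x + y) \<partial>\<nu> \<partial>conv_pow \<nu> n)"
    using convolution_emeasure'[of "{t}" "conv_pow \<nu> n" \<nu>] Bm assms by (simp add: prob_space.finite_measure)
  also have "\<dots> = (\<integral>\<^sup>+x. 0 \<partial>conv_pow \<nu> n)"
  proof (intro nn_integral_cong)
    fix x :: real
    have "(\<integral>\<^sup>+y. indicator {t} (x + y) \<partial>\<nu>) = (\<integral>\<^sup>+y. indicator {t - x} y \<partial>\<nu>)"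
      by (intro nn_integral_cong) (auto split: split_indicator)
    also have "\<dots> = 0" using assms by simp
    finally show "(\<integral>\<^sup>+y. indicator {t} (x + y) \<partial>\<nu>) = 0" .
  qed
  finally show ?thesis by simp
qed

lemma (in prob_space) sum_law:
  assumes ind: "indep_vars (\<lambda>_. borel) X {0..<n}"
    and d: "\<And>i. i < n \<Longrightarrow> distr M borel (X i) = \<nu>"
    and "prob_space \<nu>" "sets \<nu> = sets borel"
  shows "distr M borel (\<lambda>\<omega>. \<Sum>i<n. X i \<omega>) = conv_pow \<nu> n"
  using ind d
proof (induction n)
  case 0
  then show ?case by (simp add: distr_const)
next
  case (Suc n)
  have rv: "\<And>i. i < Suc n \<Longrightarrow> random_variable borel (X i)"
    using Suc.prems(1) unfolding indep_vars_def by auto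
  have ind': "indep_vars (\<lambda>_. borel) X {0..<n}"
    by (rule indep_vars_subset[OF Suc.prems(1)]) auto
  have IH: "distr M borel (\<lambda>\<omega>. \<Sum>i<n. X i \<omega>) = conv_pow \<nu> n"
    using Suc.IH[OF ind'] Suc.prems(2) by auto
  have "indep_var borel (X n) borel (\<lambda>\<omega>. \<Sum>i\<in>{0..<n}. X i \<omega>)"
    by (rule indep_vars_sum) (use Suc.prems(1) in \<open>auto simp: atLeast0_lessThan_Suc\<close>)
  then have iv: "indep_var borel (X n) borel (\<lambda>\<omega>. \<Sum>i<n. X i \<omega>)"
    by (simp add: atLeast0LessThan)
  have rs: "random_variable borel (\<lambda>\<omega>. \<Sum>i<n. X i \<omega>)"
    using rv by (intro borel_measurable_sum) auto
  have "distr M borel (\<lambda>\<omega>. \<Sum>i<Suc n. X i \<omega>) = distr M borel (\<lambda>\<omega>. X n \<omega> + (\<Sum>i<n. X i \<omega>))"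
    by (simp add: add.commute)
  also have "\<dots> = convolution (distr M borel (X n)) (distr M borel (\<lambda>\<omega>. \<Sum>i<n. X i \<omega>))"
    by (rule sum_indep_random_variable[OF iv rv[of n] rs]) simp
  also have "\<dots> = conv_pow \<nu> (Suc n)" using IH Suc.prems(2)[of n] by simp
  finally show ?case .
qed

lemma ln_ineq:
  assumes "0 < e" "e < (1::real)"
  shows "e - ln (1 + e) \<le> - e - ln (1 - e)"
proof -
  let ?f = "\<lambda>x::real. ln (1 + x) - ln (1 - x) - 2 * x"
  have "?f 0 \<le> ?f e"
  proof (rule DERIV_nonneg_imp_nondecreasing[of 0 e ?f])
    show "0 \<le> e" using assms by simp
    fix x assume x: "0 \<le> x" "x \<le> e"
    then have x1: "x < 1" using assms by simp
    have "x * x \<le> x * 1" using x x1 by (intro mult_left_mono) auto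
    then have xx: "1 - x * x > 0" using x1 by simp
    have d: "(?f has_real_derivative (1 / (1 + x) + 1 / (1 - x) - 2)) (at x)"
    proof -
      show ?thesis
        using x x1 xx by (auto intro!: derivative_eq_intros simp: field_simps)
    qed
    have "1 / (1 + x) + 1 / (1 - x) - 2 = 2 * x^2 / ((1 + x) * (1 - x))"
      using x x1 xx by (simp add: field_simps power2_eq_square)
    also have "\<dots> \<ge> 0" using x x1 by (intro divide_nonneg_pos) auto
    finally show "\<exists>y. (?f has_real_derivative y) (at x) \<and> 0 \<le> y" using d by blast
  qed
  then show ?thesis by simp
qed

lemma gamma_density_nonneg: "k > 0 \<Longrightarrow> \<theta> > 0 \<Longrightarrow> gamma_density k \<theta> x \<ge> 0"
  by (auto simp: gamma_density_def intro!: divide_nonneg_pos Gamma_real_pos)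

lemma gamma_density_meas[measurable]: "gamma_density k \<theta> \<in> borel_measurable borel"
  unfolding gamma_density_def by measurable

lemma gamma_moment_pt:
  assumes "k > 0" "\<theta> > 0"
  shows "ennreal \<theta> * ennreal ((\<theta> * t) ^ j * gamma_density k \<theta> (\<theta> * t)) =
     ennreal (\<theta> ^ j / Gamma k) * ennreal (indicator {0..} t * t powr (k + real j - 1) / exp t)"
proof (cases "t > 0")
  case True
  have G: "Gamma k > 0" using assms by (simp add: Gamma_real_pos)
  have e1: "(\<theta> * t) powr (k - 1) = \<theta> powr (k - 1) * t powr (k - 1)"
    using assms True by (simp add: powr_mult)
  have e2: "\<theta> powr k = \<theta> * \<theta> powr (k - 1)"
    using assms powr_add[of \<theta> 1 "k - 1"] by simp
  have e3: "t powr (k + real j - 1) = t ^ j * t powr (k - 1)"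
    using assms True powr_add[of t "real j" "k - 1"] by (simp add: powr_realpow algebra_simps)
  have "\<theta> * ((\<theta> * t) ^ j * gamma_density k \<theta> (\<theta> * t)) =
     \<theta> ^ j / Gamma k * (indicator {0..} t * t powr (k + real j - 1) / exp t)"
    using assms True G
    by (simp add: gamma_density_def e1 e2 e3 power_mult_distrib field_simps exp_minus)
  moreover have "\<theta> ^ j / Gamma k \<ge> 0" "\<theta> \<ge> 0" using assms G by auto
  ultimately show ?thesis by (simp add: ennreal_mult'[symmetric] ennreal_mult[symmetric])
next
  case False
  then show ?thesis using assms
    by (cases "t = 0") (auto simp: gamma_density_def zero_less_mult_iff)
qed

lemma gamma_moment_nn:
  assumes "k > 0" "\<theta> > 0"
  shows "(\<integral>\<^sup>+x. ennreal (x ^ j * gamma_density k \<theta> x) \<partial>lborel) = ennreal (\<theta> ^ j * Gamma (k + real j) / Gamma k)"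
proof -
  have "(\<integral>\<^sup>+x. ennreal (x ^ j * gamma_density k \<theta> x) \<partial>lborel)
      = ennreal \<bar>\<theta>\<bar> * (\<integral>\<^sup>+t. ennreal ((0 + \<theta> * t) ^ j * gamma_density k \<theta> (0 + \<theta> * t)) \<partial>lborel)"
    by (rule nn_integral_real_affine) (use assms in auto)
  also have "\<dots> = (\<integral>\<^sup>+t. ennreal \<theta> * ennreal ((\<theta> * t) ^ j * gamma_density k \<theta> (\<theta> * t)) \<partial>lborel)"
    using assms by (subst nn_integral_cmult) auto
  also have "\<dots> = (\<integral>\<^sup>+t. ennreal (\<theta> ^ j / Gamma k) * ennreal (indicator {0..} t * t powr (k + real j - 1) / exp t) \<partial>lborel)"
    by (intro nn_integral_cong gamma_moment_pt assms)
  also have "\<dots> = ennreal (\<theta> ^ j / Gamma k) * ennreal (Gamma (k + real j))"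
    using assms by (subst nn_integral_cmult) (auto simp: Gamma_conv_nn_integral_real)
  also have "\<dots> = ennreal (\<theta> ^ j * Gamma (k + real j) / Gamma k)"
    using assms by (simp add: ennreal_mult'[symmetric] Gamma_real_pos less_imp_le)
  finally show ?thesis .
qed

lemma gamma_moment:
  assumes "k > 0" "\<theta> > 0"
  shows "has_bochner_integral lborel (\<lambda>x. x ^ j * gamma_density k \<theta> x) (\<theta> ^ j * Gamma (k + real j) / Gamma k)"
proof -
  have nn: "0 \<le> x ^ j * gamma_density k \<theta> x" for x
    using assms by (cases "x > 0") (auto simp: gamma_density_def intro!: gamma_density_nonneg)
  have "integrable lborel (\<lambda>x. x ^ j * gamma_density k \<theta> x) \<and>
     integral\<^sup>L lborel (\<lambda>x. x ^ j * gamma_density k \<theta> x) = \<theta> ^ j * Gamma (k + real j) / Gamma k"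
    by (rule nn_integral_eq_integrable[THEN iffD1])
       (use assms nn gamma_moment_nn[OF assms] in \<open>auto simp: Gamma_real_pos less_imp_le\<close>)
  then show ?thesis by (simp add: has_bochner_integral_iff)
qed

lemma gamma_moments:
  assumes "k > 0" "\<theta> > 0"
  shows "has_bochner_integral lborel (\<lambda>x. gamma_density k \<theta> x) 1"
    "has_bochner_integral lborel (\<lambda>x. x * gamma_density k \<theta> x) (k * \<theta>)"
    "has_bochner_integral lborel (\<lambda>x. x^2 * gamma_density k \<theta> x) (k * (k + 1) * \<theta>^2)"
    "has_bochner_integral lborel (\<lambda>x. x^3 * gamma_density k \<theta> x) (k * (k + 1) * (k + 2) * \<theta>^3)"
    "has_bochner_integral lborel (\<lambda>x. x^4 * gamma_density k \<theta> x) (k * (k + 1) * (k + 2) * (k + 3) * \<theta>^4)"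
proof -
  have np: "\<And>r::real. r > 0 \<Longrightarrow> r \<notin> \<int>\<^sub>\<le>\<^sub>0" by (auto simp: nonpos_Ints_def)
  have G0: "Gamma k > 0" using assms by (simp add: Gamma_real_pos)
  have G1: "Gamma (k + 1) = k * Gamma k" using np[of k] assms by (simp add: Gamma_plus1)
  have G2: "Gamma (k + 2) = (k + 1) * k * Gamma k"
    using np[of "k+1"] assms Gamma_plus1[of "k+1"] G1 by (simp add: add.assoc)
  have G3: "Gamma (k + 3) = (k + 2) * (k + 1) * k * Gamma k"
    using np[of "k+2"] assms Gamma_plus1[of "k+2"] G2 by (simp add: add.assoc)
  have G4: "Gamma (k + 4) = (k + 3) * (k + 2) * (k + 1) * k * Gamma k"
    using np[of "k+3"] assms Gamma_plus1[of "k+3"] G3 by (simp add: add.assoc)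
  show "has_bochner_integral lborel (\<lambda>x. gamma_density k \<theta> x) 1"
    using gamma_moment[OF assms, of 0] G0 by simp
  show "has_bochner_integral lborel (\<lambda>x. x * gamma_density k \<theta> x) (k * \<theta>)"
    using gamma_moment[OF assms, of 1] G0 G1 by (simp add: mult.commute)
  show "has_bochner_integral lborel (\<lambda>x. x^2 * gamma_density k \<theta> x) (k * (k + 1) * \<theta>^2)"
  proof -
    have e: "\<theta> ^ 2 * Gamma (k + real 2) / Gamma k = k * (k + 1) * \<theta>^2" using G0 G2 by (simp add: field_simps)
    show ?thesis by (subst e[symmetric]) (rule gamma_moment[OF assms])
  qed
  show "has_bochner_integral lborel (\<lambda>x. x^3 * gamma_density k \<theta> x) (k * (k + 1) * (k + 2) * \<theta>^3)"
  proof -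
    have e: "\<theta> ^ 3 * Gamma (k + real 3) / Gamma k = k * (k + 1) * (k + 2) * \<theta>^3" using G0 G3 by (simp add: field_simps)
    show ?thesis by (subst e[symmetric]) (rule gamma_moment[OF assms])
  qed
  show "has_bochner_integral lborel (\<lambda>x. x^4 * gamma_density k \<theta> x) (k * (k + 1) * (k + 2) * (k + 3) * \<theta>^4)"
  proof -
    have e: "\<theta> ^ 4 * Gamma (k + real 4) / Gamma k = k * (k + 1) * (k + 2) * (k + 3) * \<theta>^4" using G0 G4 by (simp add: field_simps)
    show ?thesis by (subst e[symmetric]) (rule gamma_moment[OF assms])
  qed
qed

definition gamma_law :: "real \<Rightarrow> real \<Rightarrow> real measure" where
  "gamma_law k \<theta> = density lborel (\<lambda>x. ennreal (gamma_density k \<theta> x))"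

lemma gamma_law_basic:
  assumes "k > 0" "\<theta> > 0"
  shows "prob_space (gamma_law k \<theta>)" "sets (gamma_law k \<theta>) = sets borel"
proof -
  have "emeasure (gamma_law k \<theta>) (space (gamma_law k \<theta>)) = (\<integral>\<^sup>+x. ennreal (x ^ 0 * gamma_density k \<theta> x) \<partial>lborel)"
    by (simp add: gamma_law_def emeasure_density)
  also have "\<dots> = 1"
  proof -
    have G: "Gamma k > 0" using assms by (simp add: Gamma_real_pos)
    show ?thesis by (subst gamma_moment_nn[OF assms]) (use G in auto)
  qed
  finally show "prob_space (gamma_law k \<theta>)" by (rule prob_spaceI)
  show "sets (gamma_law k \<theta>) = sets borel" by (simp add: gamma_law_def)
qed

lemma gamma_law_atom: "emeasure (gamma_law k \<theta>) {t} = 0"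
proof -
  have "AE x in lborel. x \<in> {t} \<longrightarrow> ennreal (gamma_density k \<theta> x) = 0"
    using AE_lborel_singleton[of t] by (rule eventually_mono) simp
  then have "{t} \<in> null_sets (gamma_law k \<theta>)"
    unfolding gamma_law_def by (subst null_sets_density_iff) auto
  then show ?thesis by auto
qed

lemma gamma_law_neg: "emeasure (gamma_law k \<theta>) {..0} = 0"
proof -
  have "emeasure (gamma_law k \<theta>) {..0} = (\<integral>\<^sup>+x. ennreal (gamma_density k \<theta> x) * indicator {..0} x \<partial>lborel)"
    by (simp add: gamma_law_def emeasure_density)
  also have "(\<lambda>x. ennreal (gamma_density k \<theta> x) * indicator {..0} x) = (\<lambda>x. 0)"
    by (auto simp: fun_eq_iff gamma_density_def split: split_indicator)
  finally show ?thesis by simp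
qed

lemma gamma_shift_integral:
  assumes "k > 0" "\<theta> > 0" "f \<in> borel_measurable borel"
    and "has_bochner_integral lborel (\<lambda>x. gamma_density k \<theta> x * f (x - m)) v"
  shows "integrable (distr (gamma_law k \<theta>) borel (\<lambda>x. x - m)) f \<and>
         integral\<^sup>L (distr (gamma_law k \<theta>) borel (\<lambda>x. x - m)) f = v"
proof -
  note [measurable] = assms(3)
  have m: "(\<lambda>x. x - m) \<in> gamma_law k \<theta> \<rightarrow>\<^sub>M borel" by (simp add: gamma_law_def)
  have nn: "AE x in lborel. 0 \<le> gamma_density k \<theta> x" using gamma_density_nonneg assms by auto
  have "integrable (distr (gamma_law k \<theta>) borel (\<lambda>x. x - m)) f = integrable (gamma_law k \<theta>) (\<lambda>x. f (x - m))"
    by (rule integrable_distr_eq[OF m]) simp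
  also have "\<dots> = integrable lborel (\<lambda>x. gamma_density k \<theta> x *\<^sub>R f (x - m))"
    unfolding gamma_law_def by (rule integrable_density) (auto simp: nn)
  finally have 1: "integrable (distr (gamma_law k \<theta>) borel (\<lambda>x. x - m)) f = integrable lborel (\<lambda>x. gamma_density k \<theta> x * f (x - m))"
    by simp
  have "integral\<^sup>L (distr (gamma_law k \<theta>) borel (\<lambda>x. x - m)) f = integral\<^sup>L (gamma_law k \<theta>) (\<lambda>x. f (x - m))"
    by (rule integral_distr[OF m]) simp
  also have "\<dots> = integral\<^sup>L lborel (\<lambda>x. gamma_density k \<theta> x *\<^sub>R f (x - m))"
    unfolding gamma_law_def by (rule integral_density) (auto simp: nn)
  finally have 2: "integral\<^sup>L (distr (gamma_law k \<theta>) borel (\<lambda>x. x - m)) f = integral\<^sup>L lborel (\<lambda>x. gamma_density k \<theta> x * f (x - m))"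
    by simp
  show ?thesis using 1 2 assms(4) by (simp add: has_bochner_integral_iff)
qed

lemma gamma_centered:
  assumes "k > 0" "\<theta> > 0"
  defines "m \<equiv> k * \<theta>"
  shows "has_bochner_integral lborel (\<lambda>x. gamma_density k \<theta> x * (x - m)) 0"
    "has_bochner_integral lborel (\<lambda>x. gamma_density k \<theta> x * (x - m)^2) (k * \<theta>^2)"
    "has_bochner_integral lborel (\<lambda>x. gamma_density k \<theta> x * (x - m)^4) ((3 * k^2 + 6 * k) * \<theta>^4)"
proof -
  note g = gamma_moments[OF assms(1,2)]
  let ?g = "gamma_density k \<theta>"
  have "has_bochner_integral lborel (\<lambda>x. x * ?g x - m * ?g x) (k * \<theta> - m * 1)"
    by (intro has_bochner_integral_diff has_bochner_integral_mult_right g)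
  then show "has_bochner_integral lborel (\<lambda>x. ?g x * (x - m)) 0"
    by (rule has_bochner_integral_cong[THEN iffD1, rotated -1]) (auto simp: m_def algebra_simps)
  have "has_bochner_integral lborel (\<lambda>x. x^2 * ?g x - 2 * m * (x * ?g x) + m^2 * ?g x)
      (k * (k + 1) * \<theta>^2 - 2 * m * (k * \<theta>) + m^2 * 1)"
    by (intro has_bochner_integral_diff has_bochner_integral_add has_bochner_integral_mult_right g)
  then show "has_bochner_integral lborel (\<lambda>x. ?g x * (x - m)^2) (k * \<theta>^2)"
    by (rule has_bochner_integral_cong[THEN iffD1, rotated -1])
       (auto simp: m_def algebra_simps power2_eq_square)
  have "has_bochner_integral lborel (\<lambda>x. x^4 * ?g x - 4 * m * (x^3 * ?g x) + 6 * m^2 * (x^2 * ?g x)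
         - 4 * m^3 * (x * ?g x) + m^4 * ?g x)
      (k * (k + 1) * (k + 2) * (k + 3) * \<theta>^4 - 4 * m * (k * (k + 1) * (k + 2) * \<theta>^3)
        + 6 * m^2 * (k * (k + 1) * \<theta>^2) - 4 * m^3 * (k * \<theta>) + m^4 * 1)"
    by (intro has_bochner_integral_diff has_bochner_integral_add has_bochner_integral_mult_right g)
  then show "has_bochner_integral lborel (\<lambda>x. ?g x * (x - m)^4) ((3 * k^2 + 6 * k) * \<theta>^4)"
    by (rule has_bochner_integral_cong[THEN iffD1, rotated -1])
       (auto simp: m_def algebra_simps power2_eq_square power3_eq_cube power4_eq_xxxx)
qed

lemma abs3_bound:
  fixes x a :: real assumes "a > 0"
  shows "\<bar>x\<bar>^3 \<le> (a * x^2 + x^4 / a) / 2"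
proof -
  have h: "x^2 * (\<bar>x\<bar> - a)^2 = x^4 - 2 * a * \<bar>x\<bar>^3 + a^2 * x^2"
    by (simp add: power2_eq_square power3_eq_cube power4_eq_xxxx algebra_simps abs_mult_self_eq)
  have "0 \<le> x^2 * (\<bar>x\<bar> - a)^2" by simp
  then have "2 * a * \<bar>x\<bar>^3 \<le> x^4 + a^2 * x^2" using h by simp
  then show ?thesis using assms by (simp add: field_simps power2_eq_square)
qed

lemma BE_gamma:
  assumes BE: "BE_constant C" and k: "k > 0" and th: "\<theta> > 0" and n: "n \<ge> 1"
  shows "C \<ge> 0 \<and> \<bar>measure (conv_pow (gamma_law k \<theta>) n) {..real n * (k * \<theta>)} - 1/2\<bar> \<le> C / sqrt n * sqrt (3 + 6 / k)"
proof -
  define m where "m = k * \<theta>"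
  define \<mu> where "\<mu> = distr (gamma_law k \<theta>) borel (\<lambda>x. x - m)"
  interpret G: prob_space "gamma_law k \<theta>" by (rule gamma_law_basic[OF k th])
  have Gs: "sets (gamma_law k \<theta>) = sets borel" by (rule gamma_law_basic[OF k th])
  have P: "prob_space \<mu>" unfolding \<mu>_def by (rule G.prob_space_distr) (simp add: gamma_law_def)
  have S: "sets \<mu> = sets borel" by (simp add: \<mu>_def)
  note gc = gamma_centered[OF k th, folded m_def]
  have I1: "integrable \<mu> (\<lambda>x. x) \<and> integral\<^sup>L \<mu> (\<lambda>x. x) = 0"
    unfolding \<mu>_def by (rule gamma_shift_integral[OF k th, where f="\<lambda>x. x"]) (use gc in auto)
  have I2: "integrable \<mu> (\<lambda>x. x^2) \<and> integral\<^sup>L \<mu> (\<lambda>x. x^2) = k * \<theta>^2"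
    unfolding \<mu>_def by (rule gamma_shift_integral[OF k th, where f="\<lambda>x. x^2"]) (use gc in auto)
  have I4: "integrable \<mu> (\<lambda>x. x^4) \<and> integral\<^sup>L \<mu> (\<lambda>x. x^4) = (3 * k^2 + 6 * k) * \<theta>^4"
    unfolding \<mu>_def by (rule gamma_shift_integral[OF k th, where f="\<lambda>x. x^4"]) (use gc in auto)
  define s where "s = sqrt (3 + 6 / k)"
  define K where "K = sqrt k"
  define a where "a = s * \<theta> * K"
  have s0: "s > 0" unfolding s_def using k by (simp add: add_pos_pos)
  have K0: "K > 0" unfolding K_def using k by simp
  have kK: "k = K^2" unfolding K_def using k by simp
  have a0: "a > 0" unfolding a_def using s0 K0 th by simp
  have ss: "s^2 = 3 + 6 / k" unfolding s_def using k by (simp add: add_pos_pos less_imp_le)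
  have dom: "integrable \<mu> (\<lambda>x. (a * x^2 + x^4 / a) / 2)"
    using I2 I4 by auto
  have I3: "integrable \<mu> (\<lambda>x. \<bar>x\<bar>^3)"
  proof (rule Bochner_Integration.integrable_bound[OF dom])
    show "(\<lambda>x. \<bar>x\<bar>^3) \<in> borel_measurable \<mu>" using S by simp
    have pw: "norm (\<bar>x\<bar>^3) \<le> norm ((a * x^2 + x^4 / a) / 2)" for x :: real
    proof -
      have "\<bar>x\<bar>^3 \<le> (a * x^2 + x^4 / a) / 2" by (rule abs3_bound[OF a0])
      then show ?thesis by (auto simp: real_norm_def intro: order_trans[OF _ abs_ge_self])
    qed
    show "AE x in \<mu>. norm (\<bar>x\<bar>^3) \<le> norm ((a * x^2 + x^4 / a) / 2)"
      by (rule AE_I2) (rule pw)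
  qed
  define T where "T = integral\<^sup>L \<mu> (\<lambda>x. \<bar>x\<bar>^3)"
  have "T \<le> integral\<^sup>L \<mu> (\<lambda>x. (a * x^2 + x^4 / a) / 2)"
    unfolding T_def by (rule integral_mono[OF I3 dom]) (rule abs3_bound[OF a0])
  also have "\<dots> = (a * (k * \<theta>^2) + (3 * k^2 + 6 * k) * \<theta>^4 / a) / 2"
    using I2 I4 by simp
  also have "\<dots> = s * (K * \<theta>)^3"
  proof -
    have "(3 * k^2 + 6 * k) = s^2 * K^4" using ss kK k by (simp add: field_simps power2_eq_square power4_eq_xxxx)
    then show ?thesis unfolding a_def kK using s0 K0 th
      by (simp add: field_simps power2_eq_square power3_eq_cube power4_eq_xxxx)
  qed
  finally have Tle: "T \<le> s * (K * \<theta>)^3" .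
  have V2: "integral\<^sup>L \<mu> (\<lambda>x. x^2) powr (3/2) = (K * \<theta>)^3"
  proof -
    have "integral\<^sup>L \<mu> (\<lambda>x. x^2) = (K * \<theta>) powr 2" using I2 kK K0 th
      by (simp add: power_mult_distrib powr_realpow)
    then have "integral\<^sup>L \<mu> (\<lambda>x. x^2) powr (3/2) = (K * \<theta>) powr 3"
      by (simp add: powr_powr)
    then show ?thesis using K0 th by (simp add: powr_realpow)
  qed
  have Tpos: "T > 0"
  proof -
    have "T \<ge> 0" unfolding T_def by simp
    moreover have "T \<noteq> 0"
    proof
      assume "T = 0"
      then have "AE x in \<mu>. \<bar>x\<bar>^3 = 0"
        unfolding T_def using integral_nonneg_eq_0_iff_AE[OF I3] by simp
      then have "AE x in \<mu>. x^2 = 0" by (rule eventually_mono) simp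
      then have "integral\<^sup>L \<mu> (\<lambda>x. x^2) = 0" by (rule integral_eq_zero_AE)
      then show False using I2 k th by simp
    qed
    ultimately show ?thesis by simp
  qed
  have m0: "integral\<^sup>L \<mu> (\<lambda>x. x) = 0" using I1 by simp
  have v0: "integral\<^sup>L \<mu> (\<lambda>x. x^2) > 0" using I2 k th by simp
  have BE': "\<bar>measure (conv_pow \<mu> n) {.. 0 * sqrt (real n * (\<integral>x. x ^ 2 \<partial>\<mu>))} - Phi 0\<bar>
            \<le> C / sqrt (real n) * ((\<integral>x. \<bar>x\<bar> ^ 3 \<partial>\<mu>) / (\<integral>x. x ^ 2 \<partial>\<mu>) powr (3/2))"
    using BE unfolding BE_constant_def using P S I3 m0 v0 n by blast
  define \<rho> where "\<rho> = T / (K * \<theta>)^3"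
  have \<rho>pos: "\<rho> > 0" unfolding \<rho>_def using Tpos K0 th by simp
  have \<rho>le: "\<rho> \<le> s" unfolding \<rho>_def using Tle K0 th by (simp add: divide_le_eq)
  have eqm: "measure (conv_pow \<mu> n) {..0} = measure (conv_pow (gamma_law k \<theta>) n) {..real n * m}"
  proof -
    have "emeasure (conv_pow \<mu> n) {..0} = (\<integral>\<^sup>+x. indicator {..0} x \<partial>conv_pow \<mu> n)"
      using conv_pow_basic[OF P S] by simp
    also have "\<dots> = (\<integral>\<^sup>+x. indicator {..0} (x - real n * m) \<partial>conv_pow (gamma_law k \<theta>) n)"
      unfolding \<mu>_def by (rule conv_pow_shift[OF G.prob_space_axioms Gs]) simp
    also have "\<dots> = (\<integral>\<^sup>+x. indicator {..real n * m} x \<partial>conv_pow (gamma_law k \<theta>) n)"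
      by (intro nn_integral_cong) (simp split: split_indicator)
    also have "\<dots> = emeasure (conv_pow (gamma_law k \<theta>) n) {..real n * m}"
      using conv_pow_basic[OF G.prob_space_axioms Gs] by simp
    finally show ?thesis by (simp add: measure_def)
  qed
  have main: "\<bar>measure (conv_pow (gamma_law k \<theta>) n) {..real n * m} - 1/2\<bar> \<le> C / sqrt n * \<rho>"
    using BE' eqm V2 by (simp add: Phi_0 \<rho>_def T_def)
  have sn: "sqrt (real n) > 0" using n by simp
  have C0: "C \<ge> 0"
  proof (rule ccontr)
    assume "\<not> C \<ge> 0"
    then have "C / sqrt n * \<rho> < 0" using sn \<rho>pos by (simp add: mult_neg_pos divide_neg_pos)
    then show False using main by linarith
  qed
  have "C / sqrt n * \<rho> \<le> C / sqrt n * s"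
    using C0 sn \<rho>le by (intro mult_left_mono) auto
  then show ?thesis using main C0 unfolding m_def s_def by linarith
qed

lemma tilt_tail:
  assumes "prob_space \<mu>" "sets \<mu> = sets borel" "prob_space \<nu>" "sets \<nu> = sets borel" "a \<ge> 0"
    and H: "\<And>g. g \<in> borel_measurable borel \<Longrightarrow>
        (\<integral>\<^sup>+x. g x \<partial>\<nu>) = (\<integral>\<^sup>+x. g x * ennreal (a * exp (l * x)) \<partial>\<mu>)"
    and A: "A \<in> sets borel" and b: "b \<ge> 0" and bd: "\<And>x. x \<in> A \<Longrightarrow> b \<le> a ^ n * exp (l * x)"
  shows "b * measure (conv_pow \<mu> n) A \<le> measure (conv_pow \<nu> n) A"
proof -
  have Bm: "prob_space (conv_pow \<mu> n)" "sets (conv_pow \<mu> n) = sets borel"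
    using conv_pow_basic[OF assms(1,2)] by auto
  have Bn: "prob_space (conv_pow \<nu> n)" "sets (conv_pow \<nu> n) = sets borel"
    using conv_pow_basic[OF assms(3,4)] by auto
  have "ennreal b * emeasure (conv_pow \<mu> n) A = (\<integral>\<^sup>+x. ennreal b * indicator A x \<partial>conv_pow \<mu> n)"
    using Bm A by (subst nn_integral_cmult_indicator) auto
  also have "\<dots> \<le> (\<integral>\<^sup>+x. indicator A x * ennreal (a ^ n * exp (l * x)) \<partial>conv_pow \<mu> n)"
    by (intro nn_integral_mono) (auto simp: bd intro!: ennreal_leI split: split_indicator)
  also have "\<dots> = (\<integral>\<^sup>+x. indicator A x \<partial>conv_pow \<nu> n)"
    by (rule conv_pow_tilt[OF assms(1-5) H, symmetric]) (use A in auto)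
  also have "\<dots> = emeasure (conv_pow \<nu> n) A" using Bn A by simp
  finally have "ennreal b * emeasure (conv_pow \<mu> n) A \<le> emeasure (conv_pow \<nu> n) A" .
  then have "ennreal (b * measure (conv_pow \<mu> n) A) \<le> ennreal (measure (conv_pow \<nu> n) A)"
    using b finite_measure.emeasure_eq_measure[OF prob_space.finite_measure[OF Bm(1)]] finite_measure.emeasure_eq_measure[OF prob_space.finite_measure[OF Bn(1)]]
    by (simp add: ennreal_mult)
  then show ?thesis by (simp add: ennreal_le_iff)
qed

lemma gamma_tilt:
  assumes k: "k > 0" and th: "\<theta> > 0" and th': "\<theta>' > 0" and g: "g \<in> borel_measurable borel"
  shows "(\<integral>\<^sup>+x. g x \<partial>gamma_law k \<theta>') =
     (\<integral>\<^sup>+x. g x * ennreal ((\<theta> / \<theta>') powr k * exp ((1/\<theta> - 1/\<theta>') * x)) \<partial>gamma_law k \<theta>)"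
proof -
  have pt: "gamma_density k \<theta>' x = gamma_density k \<theta> x * ((\<theta> / \<theta>') powr k * exp ((1/\<theta> - 1/\<theta>') * x))" for x
  proof (cases "x > 0")
    case True
    have G: "Gamma k > 0" using k by (simp add: Gamma_real_pos)
    have e: "exp (- x / \<theta>) * exp ((1/\<theta> - 1/\<theta>') * x) = exp (- x / \<theta>')"
    proof -
      have "- x / \<theta> + (1/\<theta> - 1/\<theta>') * x = - x / \<theta>'" using th th' by (simp add: field_simps)
      then show ?thesis by (simp add: exp_add[symmetric])
    qed
    have r: "gamma_density k \<theta> x * ((\<theta> / \<theta>') powr k * exp ((1/\<theta> - 1/\<theta>') * x))
        = x powr (k - 1) * (exp (- x / \<theta>) * exp ((1/\<theta> - 1/\<theta>') * x)) / (Gamma k * \<theta>' powr k)"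
      using True G th th' by (simp add: gamma_density_def powr_divide field_simps)
    show ?thesis using True r[unfolded e] by (simp add: gamma_density_def)
  qed (simp add: gamma_density_def)
  have nn: "0 \<le> gamma_density k \<theta> x" for x using gamma_density_nonneg[OF k th] .
  have "(\<integral>\<^sup>+x. g x \<partial>gamma_law k \<theta>') = (\<integral>\<^sup>+x. ennreal (gamma_density k \<theta>' x) * g x \<partial>lborel)"
    unfolding gamma_law_def by (rule nn_integral_density) (use g in auto)
  also have "\<dots> = (\<integral>\<^sup>+x. ennreal (gamma_density k \<theta> x) * (g x * ennreal ((\<theta> / \<theta>') powr k * exp ((1/\<theta> - 1/\<theta>') * x))) \<partial>lborel)"
    by (intro nn_integral_cong) (simp add: pt nn ennreal_mult mult_ac)
  also have "\<dots> = (\<integral>\<^sup>+x. g x * ennreal ((\<theta> / \<theta>') powr k * exp ((1/\<theta> - 1/\<theta>') * x)) \<partial>gamma_law k \<theta>)"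
    unfolding gamma_law_def by (rule nn_integral_density[symmetric]) (use g in auto)
  finally show ?thesis .
qed

lemma upper_half:
  assumes BE: "BE_constant C" and k: "k > 0" and th: "\<theta> > 0" and n: "n \<ge> 1"
  shows "measure (conv_pow (gamma_law k \<theta>) n) {real n * (k * \<theta>)..} \<le> 1/2 + C / sqrt n * sqrt (3 + 6 / k)"
proof -
  let ?t = "real n * (k * \<theta>)"
  let ?D = "conv_pow (gamma_law k \<theta>) n"
  have P: "prob_space ?D" "sets ?D = sets borel"
    using conv_pow_basic[OF gamma_law_basic[OF k th]] by auto
  interpret D: prob_space ?D by (rule P(1))
  have sp: "space ?D = UNIV" using sets_eq_imp_space_eq[OF P(2)] by simp
  obtain m where nm: "n = Suc m" using n by (cases n) auto
  have at: "emeasure ?D {?t} = 0"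
    unfolding nm by (rule conv_pow_atom[OF gamma_law_basic[OF k th] gamma_law_atom])
  then have at': "measure ?D {?t} = 0" by (simp add: measure_def)
  have "measure ?D {?t..} \<le> measure ?D {?t} + measure ?D {?t<..}"
  proof -
    have "{?t..} = {?t} \<union> {?t<..}" by auto
    then show ?thesis using measure_Un_le[of "{?t}" ?D "{?t<..}"] P(2) by simp
  qed
  also have "measure ?D {?t<..} = 1 - measure ?D {..?t}"
  proof -
    have "space ?D - {..?t} = {?t<..}" using sp by auto
    then show ?thesis using D.prob_compl[of "{..?t}"] P(2) by simp
  qed
  finally have 1: "measure ?D {?t..} \<le> 1 - measure ?D {..?t}" using at' by simp
  show ?thesis using 1 BE_gamma[OF BE k th n] by linarith
qed

lemma tilt_factor:
  assumes th: "\<theta> > 0" and r: "r > 0"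
  shows "((\<theta> / (r * \<theta>)) powr k) ^ n * exp ((1/\<theta> - 1/(r * \<theta>)) * (real n * (k * (r * \<theta>))))
     = exp (real n * k * ((r - 1) - ln r))"
proof -
  have a: "(\<theta> / (r * \<theta>)) powr k = exp (- k * ln r)"
    using th r by (simp add: powr_def ln_div)
  have "((\<theta> / (r * \<theta>)) powr k) ^ n = exp (real n * (- k * ln r))"
    unfolding a by (simp add: exp_of_nat_mult[symmetric])
  moreover have "(1/\<theta> - 1/(r * \<theta>)) * (real n * (k * (r * \<theta>))) = real n * k * (r - 1)"
    using th r by (simp add: field_simps)
  ultimately show ?thesis by (simp add: exp_add[symmetric] algebra_simps)
qed

theorem theorem6:
  fixes M :: "'a measure" and X :: "nat \<Rightarrow> 'a \<Rightarrow> real"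
    and k \<theta> \<epsilon> \<delta> C :: real and n :: nat
  assumes "prob_space M"
    and "BE_constant C"
    and "k > 0" and "\<theta> > 0"
    and "prob_space.indep_vars M (\<lambda>_. borel) X {0..<n}"
    and "\<And>i. i < n \<Longrightarrow> distributed M lborel (X i) (gamma_density k \<theta>)"
    and "\<epsilon> > 0" and "0 < \<delta>" and "\<delta> < 1"
    and "real n > ln ((1 + 2 * C * (3 + 6 / k) powr (3/4)
                        * sqrt (k * (\<epsilon> - ln (1 + \<epsilon>)) / ln (1 / \<delta>))) / \<delta>)
                  / (k * (\<epsilon> - ln (1 + \<epsilon>)))"
  shows "measure M {\<omega> \<in> space M.
           \<bar>(\<Sum>i<n. X i \<omega>) / (k * real n) - \<theta>\<bar> < \<epsilon> * \<theta>} > 1 - \<delta>"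
proof -
  interpret M: prob_space M by fact
  note BE = assms(2) and k = assms(3) and th = assms(4) and ind = assms(5) and dist = assms(6)
  note e0 = assms(7) and d0 = assms(8) and d1 = assms(9) and hyp = assms(10)
  let ?\<nu> = "gamma_law k \<theta>"
  have C0: "C \<ge> 0" using BE_gamma[OF BE k th, of 1] by simp
  define c where "c = \<epsilon> - ln (1 + \<epsilon>)"
  have c0: "c > 0" unfolding c_def using ln_add_one_self_less_self[OF e0] by simp
  define L where "L = ln (1 / \<delta>)"
  have L0: "L > 0" unfolding L_def using d0 d1 by simp
  define s where "s = sqrt (3 + 6 / k)"
  define B where "B = (3 + 6 / k) powr (3/4)"
  define \<zeta> where "\<zeta> = 2 * C * (3 + 6 / k) powr (3/4) * sqrt (k * (\<epsilon> - ln (1 + \<epsilon>)) / ln (1 / \<delta>))"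
  have z0: "\<zeta> \<ge> 0"
  proof -
    have "k * (\<epsilon> - ln (1 + \<epsilon>)) / ln (1 / \<delta>) \<ge> 0" using k c0 L0 unfolding c_def L_def by simp
    then show ?thesis unfolding \<zeta>_def using C0 by (intro mult_nonneg_nonneg) auto
  qed
  have kc: "k * c > 0" using k c0 by simp
  have hyp': "real n * (k * c) > ln ((1 + \<zeta>) / \<delta>)"
    using hyp kc unfolding \<zeta>_def c_def by (simp add: pos_divide_less_eq)
  have lnz: "ln ((1 + \<zeta>) / \<delta>) = ln (1 + \<zeta>) + L"
    unfolding L_def using z0 d0 by (simp add: ln_div ln_mult)
  have lnz0: "ln (1 + \<zeta>) \<ge> 0" using z0 by simp
  have nL: "real n * (k * c) > L" using hyp' lnz lnz0 by linarith
  then have n1: "n \<ge> 1" using L0 by (cases n) auto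
  have nu: "prob_space ?\<nu>" "sets ?\<nu> = sets borel" using gamma_law_basic[OF k th] by auto
  have rv: "\<And>i. i < n \<Longrightarrow> X i \<in> borel_measurable M"
  proof -
    have "\<forall>i\<in>{0..<n}. X i \<in> borel_measurable M" using ind unfolding M.indep_vars_def by (rule conjunct1)
    then show "\<And>i. i < n \<Longrightarrow> X i \<in> borel_measurable M" by simp
  qed
  have dM: "distr M borel (X i) = ?\<nu>" if i: "i < n" for i
  proof -
    have "distr M lborel (X i) = ?\<nu>" using dist[OF i] unfolding distributed_def gamma_law_def by simp
    moreover have "distr M borel (X i) = distr M lborel (X i)" by (rule distr_cong) auto
    ultimately show ?thesis by simp
  qed
  define S where "S = (\<lambda>\<omega>. \<Sum>i<n. X i \<omega>)"
  have rvS: "S \<in> borel_measurable M" unfolding S_def using rv by (intro borel_measurable_sum) auto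
  have law: "distr M borel S = conv_pow ?\<nu> n"
    unfolding S_def by (rule M.sum_law[OF ind dM nu]) auto
  let ?D = "conv_pow ?\<nu> n"
  have DP: "prob_space ?D" "sets ?D = sets borel" using conv_pow_basic[OF nu] by auto
  interpret D: prob_space ?D by (rule DP(1))
  define tu where "tu = real n * (k * ((1 + \<epsilon>) * \<theta>))"
  define tl where "tl = real n * (k * ((1 - \<epsilon>) * \<theta>))"
  have q0: "k * real n > 0" using k n1 by simp
  have seteq: "{\<omega> \<in> space M. \<bar>(\<Sum>i<n. X i \<omega>) / (k * real n) - \<theta>\<bar> < \<epsilon> * \<theta>} = S -` {tl<..<tu} \<inter> space M"
  proof -
    have iff: "\<bar>y / (k * real n) - \<theta>\<bar> < \<epsilon> * \<theta> \<longleftrightarrow> tl < y \<and> y < tu" for y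
    proof -
      have "\<bar>y / (k * real n) - \<theta>\<bar> < \<epsilon> * \<theta> \<longleftrightarrow>
          (\<theta> - \<epsilon> * \<theta>) < y / (k * real n) \<and> y / (k * real n) < \<theta> + \<epsilon> * \<theta>"
        by (auto simp: abs_less_iff)
      also have "\<dots> \<longleftrightarrow> (\<theta> - \<epsilon> * \<theta>) * (k * real n) < y \<and> y < (\<theta> + \<epsilon> * \<theta>) * (k * real n)"
        using q0 by (simp add: less_divide_eq divide_less_eq)
      finally show ?thesis unfolding tl_def tu_def by (simp add: algebra_simps)
    qed
    show ?thesis
    proof (rule set_eqI)
      fix x
      show "x \<in> {\<omega> \<in> space M. \<bar>(\<Sum>i<n. X i \<omega>) / (k * real n) - \<theta>\<bar> < \<epsilon> * \<theta>} \<longleftrightarrow> x \<in> S -` {tl<..<tu} \<inter> space M"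
        using iff[of "S x"] unfolding S_def by (simp only: mem_Collect_eq vimage_eq Int_iff greaterThanLessThan_iff) blast
    qed
  qed
  have meq: "measure M {\<omega> \<in> space M. \<bar>(\<Sum>i<n. X i \<omega>) / (k * real n) - \<theta>\<bar> < \<epsilon> * \<theta>} = measure ?D {tl<..<tu}"
    unfolding seteq law[symmetric] by (rule measure_distr[symmetric]) (use rvS in auto)
  have sub: "1 \<le> measure ?D {..tl} + measure ?D {tl<..<tu} + measure ?D {tu..}"
  proof -
    have "UNIV = {..tl} \<union> {tl<..<tu} \<union> {tu..}" by auto
    then have "measure ?D UNIV \<le> measure ?D ({..tl} \<union> {tl<..<tu}) + measure ?D {tu..}"
      using measure_Un_le[of "{..tl} \<union> {tl<..<tu}" ?D "{tu..}"] DP(2) by simp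
    also have "\<dots> \<le> measure ?D {..tl} + measure ?D {tl<..<tu} + measure ?D {tu..}"
      using measure_Un_le[of "{..tl}" ?D "{tl<..<tu}"] DP(2) by simp
    finally show ?thesis using D.prob_space sets_eq_imp_space_eq[OF DP(2)] by simp
  qed
  define R where "R = 1/2 + C / sqrt n * s"
  have R0: "R \<ge> 0"
  proof -
    have "C / sqrt n * s \<ge> 0" unfolding s_def using C0 k by (intro mult_nonneg_nonneg divide_nonneg_nonneg) auto
    then show ?thesis unfolding R_def by simp
  qed
  have up: "exp (real n * (k * c)) * measure ?D {tu..} \<le> R"
  proof -
    define \<theta>u where "\<theta>u = (1 + \<epsilon>) * \<theta>"
    have thu: "\<theta>u > 0" unfolding \<theta>u_def using e0 th by simp
    define a where "a = (\<theta> / \<theta>u) powr k"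
    define l where "l = 1/\<theta> - 1/\<theta>u"
    have l0: "l > 0"
    proof -
      have "\<theta> < \<theta>u" unfolding \<theta>u_def using th e0 by simp
      then have "1 / \<theta>u < 1 / \<theta>" using th thu by (intro divide_strict_left_mono) auto
      then show ?thesis unfolding l_def by simp
    qed
    have tf: "a ^ n * exp (l * tu) = exp (real n * (k * c))"
      unfolding a_def l_def tu_def \<theta>u_def c_def using tilt_factor[OF th, of "1 + \<epsilon>" k n] e0
      by (simp add: algebra_simps)
    have "exp (real n * (k * c)) * measure ?D {tu..} \<le> measure (conv_pow (gamma_law k \<theta>u) n) {tu..}"
    proof (rule tilt_tail[OF nu gamma_law_basic[OF k thu], where a=a and l=l])
      show "a \<ge> 0" unfolding a_def by simp
      show "(\<integral>\<^sup>+x. g x \<partial>gamma_law k \<theta>u) = (\<integral>\<^sup>+x. g x * ennreal (a * exp (l * x)) \<partial>?\<nu>)"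
        if "g \<in> borel_measurable borel" for g
        unfolding a_def l_def by (rule gamma_tilt[OF k th thu that])
      show "{tu..} \<in> sets borel" by simp
      show "exp (real n * (k * c)) \<ge> 0" by simp
      fix x assume "x \<in> {tu..}"
      then have "l * tu \<le> l * x" using l0 by (simp add: mult_left_mono)
      then have "a ^ n * exp (l * tu) \<le> a ^ n * exp (l * x)"
        unfolding a_def by (intro mult_left_mono) auto
      then show "exp (real n * (k * c)) \<le> a ^ n * exp (l * x)" using tf by simp
    qed
    also have "\<dots> \<le> R"
      using upper_half[OF BE k thu n1] unfolding R_def s_def tu_def \<theta>u_def by simp
    finally show ?thesis .
  qed
  have low: "exp (real n * (k * c)) * measure ?D {..tl} \<le> R"
  proof (cases "\<epsilon> < 1")
    case True
    define \<theta>l where "\<theta>l = (1 - \<epsilon>) * \<theta>"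
    have thl: "\<theta>l > 0" unfolding \<theta>l_def using True th by simp
    define a where "a = (\<theta> / \<theta>l) powr k"
    define l where "l = 1/\<theta> - 1/\<theta>l"
    have l0: "l < 0"
    proof -
      have "\<theta>l < \<theta>" unfolding \<theta>l_def using th e0 by simp
      then have "1 / \<theta> < 1 / \<theta>l" using th thl by (intro divide_strict_left_mono) auto
      then show ?thesis unfolding l_def by simp
    qed
    have tf: "a ^ n * exp (l * tl) = exp (real n * k * ((1 - \<epsilon> - 1) - ln (1 - \<epsilon>)))"
      unfolding a_def l_def tl_def \<theta>l_def using tilt_factor[OF th, of "1 - \<epsilon>" k n] True
      by simp
    have cl: "c \<le> (1 - \<epsilon> - 1) - ln (1 - \<epsilon>)" unfolding c_def using ln_ineq[OF e0 True] by simp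
    have tf2: "exp (real n * (k * c)) \<le> a ^ n * exp (l * tl)"
      unfolding tf using cl k by (simp add: mult_left_mono mult.assoc)
    have "exp (real n * (k * c)) * measure ?D {..tl} \<le> measure (conv_pow (gamma_law k \<theta>l) n) {..tl}"
    proof (rule tilt_tail[OF nu gamma_law_basic[OF k thl], where a=a and l=l])
      show "a \<ge> 0" unfolding a_def by simp
      show "(\<integral>\<^sup>+x. g x \<partial>gamma_law k \<theta>l) = (\<integral>\<^sup>+x. g x * ennreal (a * exp (l * x)) \<partial>?\<nu>)"
        if "g \<in> borel_measurable borel" for g
        unfolding a_def l_def by (rule gamma_tilt[OF k th thl that])
      show "{..tl} \<in> sets borel" by simp
      show "exp (real n * (k * c)) \<ge> 0" by simp
      fix x assume "x \<in> {..tl}"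
      then have "l * tl \<le> l * x" using l0 by (simp add: mult_left_mono_neg)
      then have "a ^ n * exp (l * tl) \<le> a ^ n * exp (l * x)"
        unfolding a_def by (intro mult_left_mono) auto
      then show "exp (real n * (k * c)) \<le> a ^ n * exp (l * x)" using tf2 by simp
    qed
    also have "\<dots> \<le> R"
      using BE_gamma[OF BE k thl n1] unfolding R_def s_def tl_def \<theta>l_def by (simp add: abs_le_iff)
    finally show ?thesis .
  next
    case False
    have "(1 - \<epsilon>) * \<theta> \<le> 0" using False th by (intro mult_nonpos_nonneg) auto
    then have "k * ((1 - \<epsilon>) * \<theta>) \<le> 0" by (rule mult_nonneg_nonpos[OF less_imp_le[OF k]])
    then have tl0: "tl \<le> 0" unfolding tl_def by (rule mult_nonneg_nonpos[OF of_nat_0_le_iff])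
    obtain m where nm: "n = Suc m" using n1 by (cases n) auto
    have "emeasure ?D {..0} = 0"
      unfolding nm using conv_pow_neg[OF nu gamma_law_neg] by blast
    then have "measure ?D {..0} = 0" by (simp add: measure_def)
    moreover have "measure ?D {..tl} \<le> measure ?D {..0}"
      using tl0 DP(2) by (intro D.finite_measure_mono) auto
    ultimately have "measure ?D {..tl} = 0" using measure_nonneg[of ?D "{..tl}"] by linarith
    then show ?thesis using R0 by simp
  qed
  define E where "E = exp (real n * (k * c))"
  have E0: "E > 0" unfolding E_def by simp
  have tails: "measure ?D {..tl} + measure ?D {tu..} \<le> 2 * R / E"
    using up low E0 unfolding E_def[symmetric] by (simp add: field_simps)
  have B1: "s \<le> B"
  proof -
    have b1: "3 + 6 / k \<ge> 1" using k by simp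
    have "s = (3 + 6 / k) powr (1/2)" unfolding s_def using k by (simp add: powr_half_sqrt)
    also have "\<dots> \<le> (3 + 6 / k) powr (3/4)" by (rule powr_mono) (use b1 in auto)
    finally show ?thesis unfolding B_def .
  qed
  have n0: "real n > 0" using n1 by simp
  have sq: "1 / sqrt (real n) \<le> sqrt (k * c / L)"
  proof -
    have "1 / real n \<le> k * c / L"
      using nL n0 L0 kc by (simp add: field_simps)
    then have "sqrt (1 / real n) \<le> sqrt (k * c / L)" by (rule real_sqrt_le_mono)
    then show ?thesis by (simp add: real_sqrt_divide)
  qed
  have zeq: "\<zeta> = 2 * C * B * sqrt (k * c / L)" unfolding \<zeta>_def B_def c_def L_def by simp
  have s0: "s \<ge> 0" unfolding s_def using k by simp
  have h: "C * s * (1 / sqrt n) \<le> C * B * sqrt (k * c / L)"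
    using B1 sq C0 s0 by (intro mult_mono mult_left_mono) auto
  have R2a: "2 * R = 1 + 2 * (C * s * (1 / sqrt n))" unfolding R_def by simp
  have R2b: "1 + \<zeta> = 1 + 2 * (C * B * sqrt (k * c / L))" unfolding zeq by simp
  have R2: "2 * R \<le> 1 + \<zeta>" using R2a R2b h by linarith
  have "ln ((1 + \<zeta>) / \<delta>) < real n * (k * c)" by (rule hyp')
  then have "(1 + \<zeta>) / \<delta> < E" unfolding E_def using z0 d0
    by (metis exp_less_cancel_iff exp_ln add_pos_nonneg zero_less_one divide_pos_pos)
  then have ZE: "(1 + \<zeta>) / E < \<delta>" using E0 d0 by (simp add: field_simps)
  have "2 * R / E \<le> (1 + \<zeta>) / E" using R2 E0 by (simp add: divide_right_mono)
  then have "measure ?D {..tl} + measure ?D {tu..} < \<delta>" using tails ZE by linarith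
  then have "measure ?D {tl<..<tu} > 1 - \<delta>" using sub by linarith
  then show ?thesis using meq by simp
qed

end
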